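(* Suppose nature draws the true function $\bar g$ uniformly at random from $\mathcal{G}_{2k+1}$. Conditionally on $\bar g$, let $\bm{x}_1,\dots,\bm{x}_n$ be i.i.d. $\mathrm{Unif}[-1,1]^p$ and $\epsilon_1,\dots,\epsilon_n$ be i.i.d. $N(0,\sigma_\epsilon^2)$, independent of each other. Set $z_i=\bar g(\bm{x}_i)+\epsilon_i$ and $y_i=t(z_i)$, where $t:\mathbb{R}\to\mathcal{Y}$ is a fixed measurable function, and let $S'=\{(\bm{x}_i,y_i)\}_{i=1}^n$. Let $\hat g$ be any estimator, i.e. any (possibly randomized) function of $S'$ taking values in $\mathcal{G}_{2k+1}$. If $$n\le \Big(\log\Big(q^{k+1}\binom{p}{k+1}\Big)-2\log2\Big)\frac{\sigma_\epsilon^2}{2},$$ then $\mathbb{P}[\hat g\neq\bar g]\ge \tfrac12$.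
   Context: For $i=1,\dots,q$ let $\phi_i(z)=\sqrt2\cos(i\pi z)$ on $[-1,1]$. Let $p,q,k$ be positive integers with $k+1\le p$, and let $\mathcal{Y}\subseteq\mathbb{R}$. $\mathcal{G}_{2k+1}$ is the set of functions $g_\mathcal{A}(\bm{x})=\prod_{(i,j)\in\mathcal{A}}\phi_i(x_j)$ on $[-1,1]^p$, where $\mathcal{A}\subseteq\{1,\dots,q\}\times\{1,\dots,p\}$ satisfies: - $|\mathcal{A}|\le k+1$; - no two elements of $\mathcal{A}$ share the same second coordinate $j$. The empty product is the constant $1$. This is a restricted subclass of labeled binary trees that use only multiplication nodes and unit weights. *)

theory Defs
  imports "HOL-Probability.Probability"
begin

text \<open>Points of [-1,1]^p are represented as functions nat => real; coordinates 1..p are used.\<close>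

definition phi :: "nat \<Rightarrow> real \<Rightarrow> real" where
  "phi i z = sqrt 2 * cos (real i * pi * z)"

definition gA :: "(nat \<times> nat) set \<Rightarrow> (nat \<Rightarrow> real) \<Rightarrow> real" where
  "gA A x = (\<Prod>(i, j)\<in>A. phi i (x j))"

definition admissible :: "nat \<Rightarrow> nat \<Rightarrow> nat \<Rightarrow> (nat \<times> nat) set \<Rightarrow> bool" where
  "admissible p q k A \<longleftrightarrow> A \<subseteq> {1..q} \<times> {1..p} \<and> card A \<le> k + 1 \<and>
     (\<forall>a\<in>A. \<forall>b\<in>A. snd a = snd b \<longrightarrow> a = b)"

definition Gcls :: "nat \<Rightarrow> nat \<Rightarrow> nat \<Rightarrow> ((nat \<Rightarrow> real) \<Rightarrow> real) set" where
  "Gcls p q k = gA ` {A. admissible p q k A}"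

definition unif_cube :: "nat \<Rightarrow> (nat \<Rightarrow> real) measure" where
  "unif_cube p = PiM {1..p} (\<lambda>_. uniform_measure lborel {-1..1::real})"

definition gauss :: "real \<Rightarrow> real measure" where
  "gauss \<sigma> = density lborel (normal_density 0 \<sigma>)"

text \<open>Sample space: (true function, covariates x_1..x_n, noises eps_1..eps_n, estimator randomness).\<close>
definition sample_space ::
  "nat \<Rightarrow> nat \<Rightarrow> nat \<Rightarrow> nat \<Rightarrow> real \<Rightarrow> 'r measure \<Rightarrow>
   (((nat \<Rightarrow> real) \<Rightarrow> real) \<times> (nat \<Rightarrow> nat \<Rightarrow> real) \<times> (nat \<Rightarrow> real) \<times> 'r) measure" where
  "sample_space p q k n \<sigma> R =
     uniform_count_measure (Gcls p q k) \<Otimes>\<^sub>M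
     (PiM {..<n} (\<lambda>_. unif_cube p) \<Otimes>\<^sub>M (PiM {..<n} (\<lambda>_. gauss \<sigma>) \<Otimes>\<^sub>M R))"

definition data_space :: "nat \<Rightarrow> nat \<Rightarrow> (nat \<Rightarrow> (nat \<Rightarrow> real) \<times> real) measure" where
  "data_space p n = PiM {..<n} (\<lambda>_. PiM {1..p} (\<lambda>_. borel) \<Otimes>\<^sub>M (borel :: real measure))"

definition observed ::
  "nat \<Rightarrow> (real \<Rightarrow> real) \<Rightarrow> ((nat \<Rightarrow> real) \<Rightarrow> real) \<Rightarrow> (nat \<Rightarrow> nat \<Rightarrow> real) \<Rightarrow> (nat \<Rightarrow> real)
     \<Rightarrow> nat \<Rightarrow> (nat \<Rightarrow> real) \<times> real" where
  "observed n t g xs es = (\<lambda>i\<in>{..<n}. (xs i, t (g (xs i) + es i)))"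

end

theory Submission
  imports Defs
begin

lemma prob_space_gauss: "0 < \<sigma> \<Longrightarrow> prob_space (gauss \<sigma>)"
  unfolding gauss_def by (rule prob_space_normal_density)

lemma sets_gauss[measurable_cong, simp]: "sets (gauss \<sigma>) = sets borel"
  unfolding gauss_def by simp

lemma space_gauss[simp]: "space (gauss \<sigma>) = UNIV"
  unfolding gauss_def by simp

lemma gauss_shift:
  "distr (gauss \<sigma>) borel (\<lambda>e. m + e) = density lborel (normal_density m \<sigma>)"
proof -
  have "density lborel (normal_density m \<sigma>) = density (distr lborel borel ((+) m)) (normal_density m \<sigma>)"
    by (simp add: lborel_distr_plus)
  also have "\<dots> = distr (density lborel (\<lambda>x. normal_density m \<sigma> (m + x))) borel ((+) m)"
    by (rule density_distr) simp_all
  also have "(\<lambda>x. normal_density m \<sigma> (m + x)) = normal_density 0 \<sigma>"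
    by (auto simp: normal_density_def fun_eq_iff)
  finally show ?thesis unfolding gauss_def by simp
qed

definition rho :: "real \<Rightarrow> real \<Rightarrow> real \<Rightarrow> real" where
  "rho \<sigma> m z = exp ((2 * z * m - m\<^sup>2) / (2 * \<sigma>\<^sup>2))"

lemma rho_pos: "0 < rho \<sigma> m z" by (simp add: rho_def)

lemma borel_rho[measurable]: "rho \<sigma> m \<in> borel_measurable borel"
  unfolding rho_def by measurable

lemma normal_rho: "normal_density 0 \<sigma> z * rho \<sigma> m z = normal_density m \<sigma> z"
proof -
  have "- z\<^sup>2 / (2 * \<sigma>\<^sup>2) + (2 * z * m - m\<^sup>2) / (2 * \<sigma>\<^sup>2) = -(z - m)\<^sup>2 / (2 * \<sigma>\<^sup>2)"
    by (simp add: field_simps power2_eq_square add_divide_distrib[symmetric] diff_divide_distrib[symmetric])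
  then show ?thesis
    unfolding normal_density_def rho_def
    by (simp add: mult.assoc exp_add[symmetric])
qed

lemma gauss_rho_ind:
  assumes A: "A \<in> sets borel"
  shows "(\<integral>\<^sup>+ z. ennreal (rho \<sigma> m z) * indicator A z \<partial>gauss \<sigma>) = emeasure (density lborel (normal_density m \<sigma>)) A"
  unfolding gauss_def using A
  by (simp add: nn_integral_density emeasure_density mult.assoc[symmetric] ennreal_mult'[symmetric] normal_rho)

lemma gauss_shift_emeasure:
  assumes A: "A \<in> sets borel"
  shows "emeasure (gauss \<sigma>) ((\<lambda>e. m + e) -` A) = emeasure (density lborel (normal_density m \<sigma>)) A"
proof -
  have "emeasure (distr (gauss \<sigma>) borel (\<lambda>e. m + e)) A = emeasure (gauss \<sigma>) ((\<lambda>e. m + e) -` A \<inter> space (gauss \<sigma>))"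
    using A by (intro emeasure_distr) auto
  then show ?thesis by (simp add: gauss_shift)
qed


definition gaussN :: "nat \<Rightarrow> real \<Rightarrow> (nat \<Rightarrow> real) measure" where "gaussN n \<sigma> = PiM {..<n} (\<lambda>_. gauss \<sigma>)"
definition shiftN :: "nat \<Rightarrow> (nat \<Rightarrow> real) \<Rightarrow> (nat \<Rightarrow> real) \<Rightarrow> (nat \<Rightarrow> real)" where "shiftN n m = (\<lambda>e. \<lambda>i\<in>{..<n}. m i + e i)"
definition LamN :: "nat \<Rightarrow> real \<Rightarrow> (nat \<Rightarrow> real) \<Rightarrow> (nat \<Rightarrow> real) \<Rightarrow> real" where "LamN n \<sigma> m = (\<lambda>z. \<Prod>i\<in>{..<n}. rho \<sigma> (m i) (z i))"

lemma space_gaussN: "space (gaussN n \<sigma>) = {..<n} \<rightarrow>\<^sub>E UNIV"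
  by (simp add: gaussN_def space_PiM)

lemma sets_gaussN: "sets (gaussN n \<sigma>) = sets (PiM {..<n} (\<lambda>_. borel))"
  unfolding gaussN_def by (intro sets_PiM_cong) auto

lemma shiftN_meas: "shiftN n m \<in> gaussN n \<sigma> \<rightarrow>\<^sub>M gaussN n \<sigma>"
  unfolding shiftN_def gaussN_def
  by (intro measurable_restrict) (auto intro!: measurable_PiM_component_rev)

lemma LamN_meas[measurable]: "LamN n \<sigma> m \<in> borel_measurable (gaussN n \<sigma>)"
  unfolding LamN_def gaussN_def
  by (intro borel_measurable_prod) (auto intro!: measurable_PiM_component_rev)

lemma LamN_pos: "0 < LamN n \<sigma> m z"
  unfolding LamN_def by (intro prod_pos) (simp add: rho_pos)

lemma indicator_PiE_prod:
  assumes "z \<in> extensional I" "finite I"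
  shows "(indicator (PiE I A) z :: ennreal) = (\<Prod>i\<in>I. indicator (A i) (z i))"
proof (cases "z \<in> PiE I A")
  case True then show ?thesis by (auto simp: PiE_iff)
next
  case False
  then obtain i where "i \<in> I" "z i \<notin> A i" using assms(1) by (auto simp: PiE_iff)
  then have "(\<Prod>i\<in>I. (indicator (A i) (z i) :: ennreal)) = 0"
    using assms(2) by (intro prod_zero) (auto intro!: bexI[of _ i])
  then show ?thesis using False by simp
qed

lemma preimage_plus_borel: "A \<in> sets borel \<Longrightarrow> (\<lambda>e. c + e) -` A \<in> sets (borel :: real measure)"
  using measurable_sets[of "\<lambda>e::real. c + e" borel borel A] by auto

lemma prob_space_gaussN: "0 < \<sigma> \<Longrightarrow> prob_space (gaussN n \<sigma>)"
  unfolding gaussN_def by (intro prob_space_PiM prob_space_gauss)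

lemma distr_shiftN:
  assumes s: "0 < \<sigma>"
  shows "distr (gaussN n \<sigma>) (gaussN n \<sigma>) (shiftN n m) = PiM {..<n} (\<lambda>i. density lborel (normal_density (m i) \<sigma>))"
proof -
  let ?N = "\<lambda>i. density lborel (normal_density (m i) \<sigma>)"
  interpret N: product_prob_space ?N
    using s by (intro product_prob_spaceI prob_space_normal_density) auto
  interpret G: product_prob_space "\<lambda>_. gauss \<sigma>"
    by (rule product_prob_spaceI, rule prob_space_gauss[OF s])
  show ?thesis
  proof (rule N.PiM_eqI)
    show "sets (distr (gaussN n \<sigma>) (gaussN n \<sigma>) (shiftN n m)) = sets (PiM {..<n} ?N)"
      by (simp add: sets_gaussN cong: sets_PiM_cong)
  next
    fix A assume A: "\<And>i. i \<in> {..<n} \<Longrightarrow> A i \<in> sets (?N i)"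
    have pre: "shiftN n m -` PiE {..<n} A \<inter> space (gaussN n \<sigma>) = PiE {..<n} (\<lambda>i. (\<lambda>e. m i + e) -` A i)"
      by (auto simp: shiftN_def space_gaussN PiE_def Pi_def extensional_def)
    have "emeasure (distr (gaussN n \<sigma>) (gaussN n \<sigma>) (shiftN n m)) (PiE {..<n} A)
        = emeasure (gaussN n \<sigma>) (shiftN n m -` PiE {..<n} A \<inter> space (gaussN n \<sigma>))"
      using A by (intro emeasure_distr shiftN_meas) (auto simp: sets_gaussN finite_lessThan intro!: sets_PiM_I_finite)
    also have "\<dots> = emeasure (gaussN n \<sigma>) (PiE {..<n} (\<lambda>i. (\<lambda>e. m i + e) -` A i))"
      by (simp only: pre)
    also have "\<dots> = (\<Prod>i\<in>{..<n}. emeasure (gauss \<sigma>) ((\<lambda>e. m i + e) -` A i))"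
      unfolding gaussN_def using A by (intro G.emeasure_PiM) (auto intro: preimage_plus_borel)
    also have "\<dots> = (\<Prod>i\<in>{..<n}. emeasure (?N i) (A i))"
      using A by (intro prod.cong refl gauss_shift_emeasure) auto
    finally show "emeasure (distr (gaussN n \<sigma>) (gaussN n \<sigma>) (shiftN n m)) (PiE {..<n} A) = (\<Prod>i\<in>{..<n}. emeasure (?N i) (A i))" .
  qed simp
qed

lemma density_LamN:
  assumes s: "0 < \<sigma>"
  shows "density (gaussN n \<sigma>) (\<lambda>z. ennreal (LamN n \<sigma> m z)) = PiM {..<n} (\<lambda>i. density lborel (normal_density (m i) \<sigma>))"
proof -
  let ?N = "\<lambda>i. density lborel (normal_density (m i) \<sigma>)"
  interpret N: product_prob_space ?N
    using s by (intro product_prob_spaceI prob_space_normal_density) auto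
  interpret G: product_prob_space "\<lambda>_. gauss \<sigma>"
    by (rule product_prob_spaceI, rule prob_space_gauss[OF s])
  show ?thesis
  proof (rule N.PiM_eqI)
    show "sets (density (gaussN n \<sigma>) (\<lambda>z. ennreal (LamN n \<sigma> m z))) = sets (PiM {..<n} ?N)"
      by (simp add: sets_gaussN cong: sets_PiM_cong)
  next
    fix A assume A: "\<And>i. i \<in> {..<n} \<Longrightarrow> A i \<in> sets (?N i)"
    have "emeasure (density (gaussN n \<sigma>) (\<lambda>z. ennreal (LamN n \<sigma> m z))) (PiE {..<n} A)
       = (\<integral>\<^sup>+ z. ennreal (LamN n \<sigma> m z) * indicator (PiE {..<n} A) z \<partial>gaussN n \<sigma>)"
      using A by (intro emeasure_density LamN_meas) (auto simp: sets_gaussN finite_lessThan intro!: sets_PiM_I_finite)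
    also have "\<dots> = (\<integral>\<^sup>+ z. (\<Prod>i\<in>{..<n}. ennreal (rho \<sigma> (m i) (z i)) * indicator (A i) (z i)) \<partial>gaussN n \<sigma>)"
    proof (intro nn_integral_cong)
      fix z assume "z \<in> space (gaussN n \<sigma>)"
      then have "z \<in> extensional {..<n}" by (simp add: space_gaussN PiE_def)
      then show "ennreal (LamN n \<sigma> m z) * indicator (PiE {..<n} A) z = (\<Prod>i\<in>{..<n}. ennreal (rho \<sigma> (m i) (z i)) * indicator (A i) (z i))"
        by (simp add: LamN_def prod.distrib prod_ennreal rho_pos less_imp_le indicator_PiE_prod)
    qed
    also have "\<dots> = (\<Prod>i\<in>{..<n}. \<integral>\<^sup>+ z. ennreal (rho \<sigma> (m i) z) * indicator (A i) z \<partial>gauss \<sigma>)"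
      unfolding gaussN_def using A by (intro G.product_nn_integral_prod) auto
    also have "\<dots> = (\<Prod>i\<in>{..<n}. emeasure (?N i) (A i))"
      using A by (intro prod.cong refl gauss_rho_ind) auto
    finally show "emeasure (density (gaussN n \<sigma>) (\<lambda>z. ennreal (LamN n \<sigma> m z))) (PiE {..<n} A) = (\<Prod>i\<in>{..<n}. emeasure (?N i) (A i))" .
  qed simp
qed

lemma change_of_measure:
  assumes s: "0 < \<sigma>" and f: "f \<in> borel_measurable (gaussN n \<sigma>)"
  shows "(\<integral>\<^sup>+ e. f (shiftN n m e) \<partial>gaussN n \<sigma>) = (\<integral>\<^sup>+ z. ennreal (LamN n \<sigma> m z) * f z \<partial>gaussN n \<sigma>)"
proof -
  have "(\<integral>\<^sup>+ e. f (shiftN n m e) \<partial>gaussN n \<sigma>) = (\<integral>\<^sup>+ z. f z \<partial>distr (gaussN n \<sigma>) (gaussN n \<sigma>) (shiftN n m))"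
  proof (intro nn_integral_distr[symmetric] shiftN_meas)
    show "f \<in> borel_measurable (distr (gaussN n \<sigma>) (gaussN n \<sigma>) (shiftN n m))"
      using f by (simp add: measurable_cong_sets[OF sets_distr refl])
  qed
  also have "\<dots> = (\<integral>\<^sup>+ z. f z \<partial>density (gaussN n \<sigma>) (\<lambda>z. ennreal (LamN n \<sigma> m z)))"
    by (simp add: distr_shiftN[OF s] density_LamN[OF s])
  also have "\<dots> = (\<integral>\<^sup>+ z. ennreal (LamN n \<sigma> m z) * f z \<partial>gaussN n \<sigma>)"
    using f by (intro nn_integral_density) auto
  finally show ?thesis .
qed


lemma shiftN_apply: "i < n \<Longrightarrow> shiftN n m e i = m i + e i"
  by (simp add: shiftN_def)

lemma LamN_shift:
  "LamN n \<sigma> m (shiftN n m e) = exp (\<Sum>i<n. ((m i)\<^sup>2 + 2 * m i * e i) / (2 * \<sigma>\<^sup>2))"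
proof -
  have "LamN n \<sigma> m (shiftN n m e) = (\<Prod>i<n. exp (((m i)\<^sup>2 + 2 * m i * e i) / (2 * \<sigma>\<^sup>2)))"
    unfolding LamN_def rho_def
    by (intro prod.cong refl) (simp add: shiftN_apply power2_eq_square algebra_simps)
  then show ?thesis by (simp add: exp_sum)
qed

lemma gauss_comp_integral:
  assumes s: "0 < \<sigma>" and i: "i < n"
  shows "integrable (gaussN n \<sigma>) (\<lambda>e. e i)" "(\<integral>e. e i \<partial>gaussN n \<sigma>) = 0"
proof -
  have d: "distr (gaussN n \<sigma>) (gauss \<sigma>) (\<lambda>e. e i) = gauss \<sigma>"
    unfolding gaussN_def using i by (intro distr_PiM_component prob_space_gauss s) auto
  have ig: "integrable (gauss \<sigma>) (\<lambda>x. x)"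
    unfolding gauss_def
    by (subst integrable_density) (auto intro: integrable_normal_moment_nz_1[OF s])
  have g0: "(\<integral>x. x \<partial>gauss \<sigma>) = 0"
    unfolding gauss_def
    by (subst integral_density) (auto simp: integral_normal_moment_nz_1[OF s])
  have meas: "(\<lambda>e. e i) \<in> gaussN n \<sigma> \<rightarrow>\<^sub>M gauss \<sigma>"
    unfolding gaussN_def using i by (intro measurable_PiM_component_rev) auto
  show "integrable (gaussN n \<sigma>) (\<lambda>e. e i)"
    using integrable_distr_eq[OF meas, of "\<lambda>x. x"] ig d by simp
  show "(\<integral>e. e i \<partial>gaussN n \<sigma>) = 0"
    using integral_distr[OF meas, of "\<lambda>x. x"] g0 d by simp
qed

lemma per_g:
  fixes Mr :: real
  assumes s: "0 < \<sigma>" and Mr: "1 \<le> Mr" and B: "B \<in> sets (gaussN n \<sigma>)"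
  shows "1/2 - ln 2 + ln Mr * measure (gaussN n \<sigma>) (shiftN n m -` B \<inter> space (gaussN n \<sigma>))
           - (Mr - 1)/2 * measure (gaussN n \<sigma>) B \<le> (\<Sum>i<n. (m i)\<^sup>2) / (2 * \<sigma>\<^sup>2)"
proof -
  let ?E = "gaussN n \<sigma>"
  interpret E: prob_space ?E by (rule prob_space_gaussN[OF s])
  define ll where "ll e = (\<Sum>i<n. (m i)\<^sup>2 / (2 * \<sigma>\<^sup>2)) + (\<Sum>i<n. (m i / \<sigma>\<^sup>2) * e i)" for e :: "nat \<Rightarrow> real"
  define c where "c z = 1/2 + (Mr - 1)/2 * indicator B z" for z :: "nat \<Rightarrow> real"
  define A where "A = shiftN n m -` B \<inter> space ?E"
  define F where "F e = c (shiftN n m e) * exp (- ll e)" for e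
  have A: "A \<in> sets ?E" unfolding A_def by (rule measurable_sets[OF shiftN_meas B])
  have [measurable]: "shiftN n m \<in> ?E \<rightarrow>\<^sub>M ?E" by (rule shiftN_meas)
  have Bm[measurable]: "B \<in> sets ?E" by (rule B)
  have cpos: "0 < c z" for z using Mr by (cases "z \<in> B") (simp_all add: c_def field_simps)
  have c_meas[measurable]: "c \<in> borel_measurable ?E" unfolding c_def by measurable
  have comp_meas[measurable]: "(\<lambda>e. e i) \<in> borel_measurable ?E" if "i < n" for i
    unfolding gaussN_def using that by (intro measurable_PiM_component_rev) auto
  have l_meas[measurable]: "ll \<in> borel_measurable ?E"
    unfolding ll_def by (intro borel_measurable_add borel_measurable_const borel_measurable_sum borel_measurable_times) auto
  have F_meas[measurable]: "F \<in> borel_measurable ?E" unfolding F_def by measurable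
  have lnc: "ln (c z) = - ln 2 + ln Mr * indicator B z" for z
  proof (cases "z \<in> B")
    case True
    then have cz: "c z = Mr / 2" by (simp add: c_def field_simps)
    have "ln (c z) = ln Mr - ln 2" unfolding cz using Mr by (subst ln_div) auto
    then show ?thesis using True by simp
  next
    case False then show ?thesis by (simp add: c_def ln_div)
  qed
  have indA: "indicator B (shiftN n m e) = (indicator A e :: real)" if "e \<in> space ?E" for e
    using that by (simp add: A_def indicator_def)
  have pw: "1 - ln 2 + ln Mr * indicator A e - F e \<le> ll e" if "e \<in> space ?E" for e
  proof -
    have "ln (c (shiftN n m e) * exp (- ll e)) \<le> c (shiftN n m e) * exp (- ll e) - 1"
      by (rule ln_le_minus_one) (simp add: cpos)
    moreover have "ln (c (shiftN n m e) * exp (- ll e)) = ln (c (shiftN n m e)) - ll e"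
      using cpos[of "shiftN n m e"] by (subst ln_mult) auto
    ultimately have "ln (c (shiftN n m e)) - ll e \<le> F e - 1"
      by (simp add: F_def)
    then show ?thesis using lnc[of "shiftN n m e"] indA[OF that] by simp
  qed
  have int_comp: "integrable ?E (\<lambda>e. e i)" "(\<integral>e. e i \<partial>?E) = 0" if "i < n" for i
    using gauss_comp_integral[OF s that] by auto
  have l_int1: "integrable ?E (\<lambda>e. \<Sum>i<n. (m i / \<sigma>\<^sup>2) * e i)"
    using int_comp by (intro Bochner_Integration.integrable_sum integrable_mult_right) auto
  have l_int: "integrable ?E ll"
    unfolding ll_def using l_int1 by simp
  have l_val: "(\<integral>e. ll e \<partial>?E) = (\<Sum>i<n. (m i)\<^sup>2) / (2 * \<sigma>\<^sup>2)"
  proof -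
    have "(\<integral>e. ll e \<partial>?E) = (\<Sum>i<n. (m i)\<^sup>2 / (2 * \<sigma>\<^sup>2)) + (\<Sum>i<n. (m i / \<sigma>\<^sup>2) * (\<integral>e. e i \<partial>?E))"
      unfolding ll_def using int_comp l_int1
      by (subst Bochner_Integration.integral_add) (auto simp: Bochner_Integration.integral_sum E.prob_space)
    also have "\<dots> = (\<Sum>i<n. (m i)\<^sup>2) / (2 * \<sigma>\<^sup>2)"
      using int_comp by (simp add: sum_divide_distrib)
    finally show ?thesis .
  qed
  have fin: "emeasure ?E X < top" for X using E.emeasure_finite[of X] top.not_eq_extremum by blast
  have c_int: "integrable ?E c" unfolding c_def using B
    by (intro Bochner_Integration.integrable_add E.integrable_const integrable_mult_right integrable_real_indicator) (auto simp: fin E.prob_space)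
  have c_val: "(\<integral>z. c z \<partial>?E) = 1/2 + (Mr - 1)/2 * measure ?E B"
    unfolding c_def using B by (subst Bochner_Integration.integral_add) (auto intro!: integrable_real_indicator simp: fin E.prob_space)
  have c_nn: "(\<integral>\<^sup>+ z. ennreal (c z) \<partial>?E) = ennreal (\<integral>z. c z \<partial>?E)"
    using c_int cpos by (intro nn_integral_eq_integral) (auto intro: less_imp_le)
  have ll_alt: "ll e = (\<Sum>i<n. ((m i)\<^sup>2 + 2 * m i * e i) / (2 * \<sigma>\<^sup>2))" for e
    unfolding ll_def sum.distrib[symmetric] using s
    by (intro sum.cong refl) (simp add: field_simps power2_eq_square)
  have Lnz: "LamN n \<sigma> m z \<noteq> 0" for z using LamN_pos[of n \<sigma> m z] by simp
  have F_nn: "(\<integral>\<^sup>+ e. ennreal (F e) \<partial>?E) = (\<integral>\<^sup>+ z. ennreal (c z) \<partial>?E)"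
  proof -
    have "(\<integral>\<^sup>+ e. ennreal (F e) \<partial>?E) = (\<integral>\<^sup>+ e. ennreal (c (shiftN n m e) / LamN n \<sigma> m (shiftN n m e)) \<partial>?E)"
    proof (intro nn_integral_cong)
      fix e
      have "LamN n \<sigma> m (shiftN n m e) = exp (ll e)" by (simp only: LamN_shift ll_alt)
      then show "ennreal (F e) = ennreal (c (shiftN n m e) / LamN n \<sigma> m (shiftN n m e))"
        by (simp add: F_def exp_minus divide_inverse)
    qed
    also have "\<dots> = (\<integral>\<^sup>+ z. ennreal (LamN n \<sigma> m z) * ennreal (c z / LamN n \<sigma> m z) \<partial>?E)"
      by (rule change_of_measure[OF s]) measurable
    also have "\<dots> = (\<integral>\<^sup>+ z. ennreal (c z) \<partial>?E)"
      by (intro nn_integral_cong) (simp add: ennreal_mult'[symmetric] LamN_pos less_imp_le Lnz)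
    finally show ?thesis .
  qed
  have F_pos: "0 \<le> F e" for e by (simp add: F_def cpos less_imp_le)
  have F_int: "integrable ?E F"
    using F_nn c_nn F_pos by (intro integrableI_nonneg) auto
  have F_val: "(\<integral>e. F e \<partial>?E) = (\<integral>z. c z \<partial>?E)"
  proof -
    have "ennreal (\<integral>e. F e \<partial>?E) = (\<integral>\<^sup>+ e. ennreal (F e) \<partial>?E)"
      using F_int F_pos by (intro nn_integral_eq_integral[symmetric]) auto
    also have "\<dots> = ennreal (\<integral>z. c z \<partial>?E)" using F_nn c_nn by simp
    finally have "ennreal (\<integral>e. F e \<partial>?E) = ennreal (\<integral>z. c z \<partial>?E)" .
    moreover have "0 \<le> (\<integral>e. F e \<partial>?E)" using F_pos by (intro integral_nonneg_AE) auto
    moreover have "0 \<le> (\<integral>z. c z \<partial>?E)" using cpos by (intro integral_nonneg_AE) (auto intro: less_imp_le)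
    ultimately show ?thesis by (simp add: ennreal_inj)
  qed
  have G_int: "integrable ?E (\<lambda>e. 1 - ln 2 + ln Mr * indicator A e - F e)"
    using A F_int by (intro Bochner_Integration.integrable_diff Bochner_Integration.integrable_add integrable_mult_right integrable_real_indicator) (auto simp: fin E.prob_space)
  have "(\<integral>e. 1 - ln 2 + ln Mr * indicator A e - F e \<partial>?E) \<le> (\<integral>e. ll e \<partial>?E)"
    using G_int l_int pw by (intro integral_mono) auto
  moreover have "(\<integral>e. 1 - ln 2 + ln Mr * indicator A e - F e \<partial>?E) = 1 - ln 2 + ln Mr * measure ?E A - (\<integral>e. F e \<partial>?E)"
    using A F_int by (subst Bochner_Integration.integral_diff) (auto intro!: integrable_real_indicator simp: fin E.prob_space)
  ultimately show ?thesis
    using l_val F_val c_val unfolding A_def by linarith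
qed


lemma phi_sq: "(phi i z)\<^sup>2 = 1 + cos (2 * real i * pi * z)"
proof -
  have "cos (2 * (real i * pi * z)) = 2 * (cos (real i * pi * z))\<^sup>2 - 1" by (rule cos_double_cos)
  then show ?thesis unfolding phi_def by (simp add: power_mult_distrib mult.assoc)
qed

lemma phi_sq_has_integral:
  assumes i: "1 \<le> i"
  shows "((\<lambda>z. 1 + cos (2 * real i * pi * z)) has_integral 2) {-1..1::real}"
proof -
  define F where "F z = z + sin (2 * real i * pi * z) / (2 * real i * pi)" for z
  have c: "2 * real i * pi \<noteq> 0" using i by auto
  have d: "(F has_vector_derivative (1 + cos (2 * real i * pi * z))) (at z within {-1..1})" for z
    unfolding F_def has_real_derivative_iff_has_vector_derivative[symmetric] using c
    by (auto intro!: derivative_eq_intros)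
  have "((\<lambda>z. 1 + cos (2 * real i * pi * z)) has_integral (F 1 - F (-1))) {-1..1::real}"
    by (rule fundamental_theorem_of_calculus) (auto intro: d)
  moreover have "sin (2 * real i * pi) = 0"
    using sin_npi[of "2 * i"] by (simp add: mult_ac)
  ultimately show ?thesis by (simp add: F_def)
qed

lemma phi_sq_unif:
  assumes i: "1 \<le> i"
  shows "(\<integral>\<^sup>+ z. ennreal ((phi i z)\<^sup>2) \<partial>uniform_measure lborel {-1..1::real}) = 1"
proof -
  have "(\<integral>\<^sup>+ z. ennreal ((phi i z)\<^sup>2) \<partial>uniform_measure lborel {-1..1::real})
      = (\<integral>\<^sup>+ z. ennreal ((phi i z)\<^sup>2) * indicator {-1..1} z \<partial>lborel) / emeasure lborel {-1..1::real}"
    by (rule nn_integral_uniform_measure) (auto simp: phi_def)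
  also have "(\<integral>\<^sup>+ z. ennreal ((phi i z)\<^sup>2) * indicator {-1..1} z \<partial>lborel)
      = (\<integral>\<^sup>+ z. ennreal (indicator {-1..1} z * (1 + cos (2 * real i * pi * z))) \<partial>lborel)"
    by (intro nn_integral_cong) (auto simp: phi_sq indicator_def)
  also have "\<dots> = ennreal 2"
  proof (rule nn_integral_has_integral_lebesgue)
    show "\<And>x. x \<in> {-1..1} \<Longrightarrow> 0 \<le> 1 + cos (2 * real i * pi * x)"
      using cos_ge_minus_one by (smt (verit))
  qed (rule phi_sq_has_integral[OF i])
  finally show ?thesis by (simp add: divide_ennreal)
qed

lemma prob_U1: "prob_space (uniform_measure lborel {-1..1::real})"
  by (intro prob_space_uniform_measure) auto

lemma admissible_inj: "admissible p q k A \<Longrightarrow> inj_on snd A"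
  unfolding admissible_def inj_on_def by blast

lemma admissible_finite: "admissible p q k A \<Longrightarrow> finite A"
  unfolding admissible_def by (auto intro: finite_subset)

lemma gA_sq_prod:
  assumes A: "admissible p q k A"
  shows "(gA A y)\<^sup>2 = (\<Prod>j\<in>{1..p}. (if j \<in> snd ` A then (phi (fst (inv_into A snd j)) (y j))\<^sup>2 else 1))"
proof -
  have inj: "inj_on snd A" by (rule admissible_inj[OF A])
  have sub: "snd ` A \<subseteq> {1..p}" using A unfolding admissible_def by auto
  have "(gA A y)\<^sup>2 = (\<Prod>a\<in>A. (phi (fst a) (y (snd a)))\<^sup>2)"
    unfolding gA_def by (simp add: prod_power_distrib case_prod_beta)
  also have "\<dots> = (\<Prod>j\<in>snd ` A. (phi (fst (inv_into A snd j)) (y j))\<^sup>2)"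
    using inj by (subst prod.reindex) (auto simp: inv_into_f_f intro!: prod.cong)
  also have "\<dots> = (\<Prod>j\<in>{1..p}. (if j \<in> snd ` A then (phi (fst (inv_into A snd j)) (y j))\<^sup>2 else 1))"
    using sub by (subst prod.If_cases) (auto intro!: prod.cong simp: Int_absorb1)
  finally show ?thesis .
qed

lemma gA_sq_int:
  assumes A: "admissible p q k A"
  shows "(\<integral>\<^sup>+ y. ennreal ((gA A y)\<^sup>2) \<partial>unif_cube p) = 1"
proof -
  let ?U = "uniform_measure lborel {-1..1::real}"
  interpret U: product_prob_space "\<lambda>_. ?U"
    by (rule product_prob_spaceI, rule prob_U1)
  define H where "H j z = (if j \<in> snd ` A then (phi (fst (inv_into A snd j)) z)\<^sup>2 else 1)" for j z
  have Hnn: "0 \<le> H j z" for j z by (simp add: H_def)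
  have Hm: "(\<lambda>z. ennreal (H j z)) \<in> borel_measurable ?U" for j
    unfolding H_def phi_def by measurable
  have "(\<integral>\<^sup>+ y. ennreal ((gA A y)\<^sup>2) \<partial>unif_cube p) = (\<integral>\<^sup>+ y. (\<Prod>j\<in>{1..p}. ennreal (H j (y j))) \<partial>unif_cube p)"
    by (intro nn_integral_cong) (simp add: gA_sq_prod[OF A] H_def[symmetric] prod_ennreal Hnn)
  also have "\<dots> = (\<Prod>j\<in>{1..p}. \<integral>\<^sup>+ z. ennreal (H j z) \<partial>?U)"
    unfolding unif_cube_def using Hm by (intro U.product_nn_integral_prod) auto
  also have "\<dots> = (\<Prod>j\<in>{1..p}. 1)"
  proof (intro prod.cong refl)
    fix j assume j: "j \<in> {1..p}"
    show "(\<integral>\<^sup>+ z. ennreal (H j z) \<partial>?U) = 1"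
    proof (cases "j \<in> snd ` A")
      case True
      then obtain a where a: "a \<in> A" "snd a = j" by auto
      have "inv_into A snd j \<in> A" using True by (auto intro: inv_into_into)
      then have "1 \<le> fst (inv_into A snd j)" using A unfolding admissible_def by auto
      then show ?thesis using True by (simp add: H_def phi_sq_unif)
    next
      case False
      then show ?thesis using prob_space.emeasure_space_1[OF prob_U1] by (simp add: H_def)
    qed
  qed
  finally show ?thesis by simp
qed


definition ypt :: "nat \<Rightarrow> real \<Rightarrow> nat \<Rightarrow> real" where
  "ypt j s = (\<lambda>l. if l = j then s else 0)"

lemma phi0: "phi i 0 = sqrt 2" by (simp add: phi_def)

lemma gA_point_in:
  assumes A: "admissible p q k A" and ij: "(i, j) \<in> A"
  shows "gA A (ypt j s) = phi i s * sqrt 2 ^ (card A - 1)"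
proof -
  have fin: "finite A" by (rule admissible_finite[OF A])
  have col: "snd a \<noteq> j" if "a \<in> A - {(i, j)}" for a
    using A that ij unfolding admissible_def by (cases a) force
  have "gA A (ypt j s) = phi i s * (\<Prod>a\<in>A - {(i, j)}. phi (fst a) (ypt j s (snd a)))"
    unfolding gA_def using fin ij by (subst prod.remove[of _ "(i,j)"]) (auto simp: case_prod_beta ypt_def)
  also have "(\<Prod>a\<in>A - {(i, j)}. phi (fst a) (ypt j s (snd a))) = (\<Prod>a\<in>A - {(i, j)}. sqrt 2)"
    using col by (intro prod.cong refl) (simp add: ypt_def phi0)
  also have "\<dots> = sqrt 2 ^ (card A - 1)" using fin ij by simp
  finally show ?thesis .
qed

lemma gA_point_out:
  assumes A: "admissible p q k A" and j: "j \<notin> snd ` A"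
  shows "gA A (ypt j s) = sqrt 2 ^ card A"
proof -
  have "gA A (ypt j s) = (\<Prod>a\<in>A. sqrt 2)"
    unfolding gA_def using j by (intro prod.cong refl) (auto simp: case_prod_beta ypt_def phi0 image_iff)
  then show ?thesis by simp
qed

lemma phi_inv: "1 \<le> i \<Longrightarrow> phi i (1 / real i) = - sqrt 2"
  by (simp add: phi_def)

lemma cos_lt_aux:
  assumes "1 \<le> i" "i < i'"
  shows "cos (real i * pi * (1 / real i')) > -1"
proof -
  have "cos pi < cos (real i * pi * (1 / real i'))"
    using assms by (intro cos_monotone_0_pi) (auto simp: field_simps)
  then show ?thesis by simp
qed

lemma gA_neq:
  assumes A: "admissible p q k A" and B: "admissible p q k B" and ij: "(i, j) \<in> A" "(i, j) \<notin> B"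
  shows "gA A \<noteq> gA B"
proof
  assume eq: "gA A = gA B"
  have i1: "1 \<le> i" using A ij unfolding admissible_def by auto
  have cA: "0 < sqrt 2 ^ (card A - 1)" by simp
  show False
  proof (cases "j \<in> snd ` B")
    case False
    have "gA A (ypt j (1 / real i)) = gA B (ypt j (1 / real i))" using eq by simp
    then have "- sqrt 2 * sqrt 2 ^ (card A - 1) = sqrt 2 ^ card B"
      using gA_point_in[OF A ij(1)] gA_point_out[OF B False] phi_inv[OF i1] by simp
    moreover have "0 < sqrt 2 ^ card B" by simp
    moreover have "0 < sqrt 2 * sqrt 2 ^ (card A - 1)" by simp
    ultimately show False by linarith
  next
    case True
    then obtain i' where i': "(i', j) \<in> B" by auto
    have ii: "i' \<noteq> i" using i' ij by auto
    have i'1: "1 \<le> i'" using B i' unfolding admissible_def by auto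
    have cB: "0 < sqrt 2 ^ (card B - 1)" by simp
    have pt: "phi i s * sqrt 2 ^ (card A - 1) = phi i' s * sqrt 2 ^ (card B - 1)" for s
      using gA_point_in[OF A ij(1), of s] gA_point_in[OF B i', of s] eq by simp
    from pt[of 0] have ceq: "sqrt 2 ^ (card A - 1) = sqrt 2 ^ (card B - 1)" by (simp add: phi0)
    have cs: "cos (real i * pi * s) = cos (real i' * pi * s)" for s
      using pt[of s] ceq cA by (simp add: phi_def)
    show False
    proof (cases "i < i'")
      case True
      have "cos (real i' * pi * (1 / real i')) = -1" using i'1 by simp
      then show False using cs[of "1 / real i'"] cos_lt_aux[OF i1 True] by simp
    next
      case False
      then have lt: "i' < i" using ii by simp
      have "cos (real i * pi * (1 / real i)) = -1" using i1 by simp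
      then show False using cs[of "1 / real i"] cos_lt_aux[OF i'1 lt] by simp
    qed
  qed
qed

lemma gA_inj: "inj_on gA {A. admissible p q k A}"
proof (rule inj_onI)
  fix A B assume A: "A \<in> {A. admissible p q k A}" and B: "B \<in> {A. admissible p q k A}" and eq: "gA A = gA B"
  show "A = B"
  proof (rule ccontr)
    assume "A \<noteq> B"
    then obtain a where "a \<in> A \<and> a \<notin> B \<or> a \<in> B \<and> a \<notin> A" by blast
    then show False
      using gA_neq[of p q k A B "fst a" "snd a"] gA_neq[of p q k B A "fst a" "snd a"] A B eq by auto
  qed
qed


lemma finite_adm: "finite {A. admissible p q k A}"
proof (rule finite_subset)
  show "{A. admissible p q k A} \<subseteq> Pow ({1..q} \<times> {1..p})" unfolding admissible_def by auto
qed auto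

lemma finite_G: "finite (Gcls p q k)"
  unfolding Gcls_def by (intro finite_imageI finite_adm)

lemma G_nonempty: "Gcls p q k \<noteq> {}"
proof -
  have "admissible p q k {}" unfolding admissible_def by auto
  then show ?thesis unfolding Gcls_def by auto
qed

lemma card_G_eq: "card (Gcls p q k) = card {A. admissible p q k A}"
  unfolding Gcls_def by (intro card_image gA_inj)

lemma card_adm_ge: "q ^ (k + 1) * (p choose (k + 1)) \<le> card {A. admissible p q k A}"
proof -
  define \<J> where "\<J> = {J. J \<subseteq> {1..p} \<and> card J = k + 1}"
  define D where "D = Sigma \<J> (\<lambda>J. J \<rightarrow>\<^sub>E {1..q})"
  define \<Phi> where "\<Phi> = (\<lambda>(J, f :: nat \<Rightarrow> nat). (\<lambda>j. (f j, j)) ` (J :: nat set))"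
  have finJ: "finite \<J>" unfolding \<J>_def by (rule finite_subset[of _ "Pow {1..p}"]) auto
  have finJ': "J \<in> \<J> \<Longrightarrow> finite J" for J unfolding \<J>_def by (auto intro: finite_subset)
  have cardD: "card D = (p choose (k + 1)) * q ^ (k + 1)"
  proof -
    have "card D = (\<Sum>J\<in>\<J>. card (J \<rightarrow>\<^sub>E {1..q}))"
      unfolding D_def using finJ finJ' by (subst card_SigmaI) (auto intro!: finite_PiE)
    also have "\<dots> = (\<Sum>J\<in>\<J>. q ^ (k + 1))"
      using finJ' by (intro sum.cong refl) (simp add: card_PiE \<J>_def)
    also have "\<dots> = card \<J> * q ^ (k + 1)" by simp
    also have "card \<J> = p choose (k + 1)" unfolding \<J>_def using n_subsets[of "{1..p}" "k+1"] by simp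
    finally show ?thesis .
  qed
  have sub: "\<Phi> ` D \<subseteq> {A. admissible p q k A}"
  proof
    fix A assume "A \<in> \<Phi> ` D"
    then obtain J f where Jf: "J \<in> \<J>" "f \<in> J \<rightarrow>\<^sub>E {1..q}" and A: "A = (\<lambda>j. (f j, j)) ` J"
      unfolding D_def \<Phi>_def by auto
    have "card A \<le> card J" unfolding A by (rule card_image_le[OF finJ'[OF Jf(1)]])
    then show "A \<in> {A. admissible p q k A}"
      using Jf unfolding A admissible_def \<J>_def by (auto simp: PiE_iff)
  qed
  have inj: "inj_on \<Phi> D"
  proof (rule inj_onI)
    fix x y assume x: "x \<in> D" and y: "y \<in> D" and eq: "\<Phi> x = \<Phi> y"
    obtain J f where xx: "x = (J, f)" "f \<in> J \<rightarrow>\<^sub>E {1..q}" using x unfolding D_def by auto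
    obtain J' f' where yy: "y = (J', f')" "f' \<in> J' \<rightarrow>\<^sub>E {1..q}" using y unfolding D_def by auto
    have e: "(\<lambda>j. (f j, j)) ` J = (\<lambda>j. (f' j, j)) ` J'" using eq unfolding xx yy \<Phi>_def by simp
    then have "snd ` (\<lambda>j. (f j, j)) ` J = snd ` (\<lambda>j. (f' j, j)) ` J'" by simp
    then have JJ: "J = J'" by (simp add: image_image)
    have "f j = f' j" if "j \<in> J" for j
    proof -
      have "(f j, j) \<in> (\<lambda>j. (f' j, j)) ` J'" using e that by auto
      then show ?thesis by auto
    qed
    then have "f = f'" using xx(2) yy(2) JJ by (auto intro: PiE_ext)
    then show "x = y" using xx yy JJ by simp
  qed
  have "card D = card (\<Phi> ` D)" using inj by (simp add: card_image)
  also have "\<dots> \<le> card {A. admissible p q k A}" by (intro card_mono finite_adm sub)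
  finally show ?thesis using cardD by (simp add: mult.commute)
qed

lemma card_G_ge: "q ^ (k + 1) * (p choose (k + 1)) \<le> card (Gcls p q k)"
  using card_adm_ge card_G_eq by simp


lemma lin_aux: "(M::real) / 2 - c + L - (M - 1) / 2 \<le> S \<Longrightarrow> L \<le> c + S - 1/2"
  by (simp add: diff_divide_distrib)

lemma sum_bound:
  fixes G :: "'g set" and m :: "'g \<Rightarrow> nat \<Rightarrow> real" and \<delta> :: "(nat \<Rightarrow> real) \<Rightarrow> 'g"
  assumes s: "0 < \<sigma>" and fin: "finite G" and ne: "G \<noteq> {}"
    and d: "\<delta> \<in> gaussN n \<sigma> \<rightarrow>\<^sub>M count_space G"
  shows "ln (real (card G)) * (\<Sum>g\<in>G. measure (gaussN n \<sigma>) (shiftN n (m g) -` {z \<in> space (gaussN n \<sigma>). \<delta> z = g} \<inter> space (gaussN n \<sigma>)))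
         \<le> real (card G) * ln 2 + (\<Sum>g\<in>G. (\<Sum>i<n. (m g i)\<^sup>2) / (2 * \<sigma>\<^sup>2))"
proof -
  let ?E = "gaussN n \<sigma>"
  interpret E: prob_space ?E by (rule prob_space_gaussN[OF s])
  define Mr where "Mr = real (card G)"
  have Mr1: "1 \<le> Mr" unfolding Mr_def using fin ne by (simp add: Suc_le_eq card_gt_0_iff)
  define B where "B g = {z \<in> space ?E. \<delta> z = g}" for g
  have Bs: "B g \<in> sets ?E" if "g \<in> G" for g
  proof -
    have "\<delta> -` {g} \<inter> space ?E \<in> sets ?E" using that by (intro measurable_sets[OF d]) auto
    moreover have "\<delta> -` {g} \<inter> space ?E = B g" unfolding B_def by auto
    ultimately show ?thesis by simp
  qed
  define a where "a g = measure ?E (shiftN n (m g) -` B g \<inter> space ?E)" for g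
  define b where "b g = measure ?E (B g)" for g
  have pg: "1/2 - ln 2 + ln Mr * a g - (Mr - 1)/2 * b g \<le> (\<Sum>i<n. (m g i)\<^sup>2) / (2 * \<sigma>\<^sup>2)" if "g \<in> G" for g
    unfolding a_def b_def by (rule per_g[OF s Mr1 Bs[OF that]])
  have bsum: "(\<Sum>g\<in>G. b g) = 1"
  proof -
    have "(\<Sum>g\<in>G. b g) = measure ?E (\<Union>g\<in>G. B g)"
      unfolding b_def using fin Bs
      by (intro E.finite_measure_finite_Union[symmetric]) (auto simp: disjoint_family_on_def B_def)
    also have "(\<Union>g\<in>G. B g) = space ?E"
      using measurable_space[OF d] unfolding B_def by auto
    finally show ?thesis by (simp add: E.prob_space)
  qed
  have "(\<Sum>g\<in>G. 1/2 - ln 2 + ln Mr * a g - (Mr - 1)/2 * b g) \<le> (\<Sum>g\<in>G. (\<Sum>i<n. (m g i)\<^sup>2) / (2 * \<sigma>\<^sup>2))"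
    using pg by (intro sum_mono) auto
  moreover have "(\<Sum>g\<in>G. 1/2 - ln 2 + ln Mr * a g - (Mr - 1)/2 * b g)
      = Mr / 2 - Mr * ln 2 + ln Mr * (\<Sum>g\<in>G. a g) - (Mr - 1)/2 * (\<Sum>g\<in>G. b g)"
  proof -
    have "(\<Sum>g\<in>G. 1/2 - ln 2 + ln Mr * a g - (Mr - 1)/2 * b g)
        = (\<Sum>g\<in>G. 1/2 - ln 2) + (\<Sum>g\<in>G. ln Mr * a g) - (\<Sum>g\<in>G. (Mr - 1)/2 * b g)"
      by (simp add: sum.distrib sum_subtractf)
    also have "\<dots> = Mr * (1/2 - ln 2) + ln Mr * (\<Sum>g\<in>G. a g) - (Mr - 1)/2 * (\<Sum>g\<in>G. b g)"
      by (simp add: sum_distrib_left Mr_def)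
    finally show ?thesis by (simp add: algebra_simps)
  qed
  ultimately have "ln Mr * (\<Sum>g\<in>G. a g) \<le> Mr * ln 2 + (\<Sum>g\<in>G. (\<Sum>i<n. (m g i)\<^sup>2) / (2 * \<sigma>\<^sup>2)) - 1/2"
    using bsum lin_aux[of Mr "Mr * ln 2" "ln Mr * (\<Sum>g\<in>G. a g)"] by (simp only: bsum mult_1_right)
  then show ?thesis unfolding Mr_def a_def B_def by simp
qed


lemma sets_unif_cube[measurable_cong]: "sets (unif_cube p) = sets (PiM {1..p} (\<lambda>_. borel :: real measure))"
  unfolding unif_cube_def by (intro sets_PiM_cong) auto

lemma space_unif_cube: "space (unif_cube p) = {1..p} \<rightarrow>\<^sub>E UNIV"
  unfolding unif_cube_def by (simp add: space_PiM)

lemma prob_unif_cube: "prob_space (unif_cube p)"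
  unfolding unif_cube_def by (intro prob_space_PiM prob_U1)

lemma phi_meas[measurable]: "phi i \<in> borel_measurable borel"
  unfolding phi_def by measurable

lemma gA_meas:
  assumes A: "admissible p q k A"
  shows "gA A \<in> borel_measurable (PiM {1..p} (\<lambda>_. borel :: real measure))"
proof -
  have "(\<lambda>x. phi (fst a) (x (snd a))) \<in> borel_measurable (PiM {1..p} (\<lambda>_. borel :: real measure))" if "a \<in> A" for a
  proof -
    have "snd a \<in> {1..p}" using A that unfolding admissible_def by auto
    then show ?thesis by measurable
  qed
  then show ?thesis unfolding gA_def case_prod_beta by (intro borel_measurable_prod) auto
qed

lemma G_meas: "g \<in> Gcls p q k \<Longrightarrow> g \<in> borel_measurable (PiM {1..p} (\<lambda>_. borel :: real measure))"
  unfolding Gcls_def using gA_meas by auto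

lemma G_meas': "g \<in> Gcls p q k \<Longrightarrow> g \<in> borel_measurable (unif_cube p)"
  using G_meas[of g p q k] by (simp add: measurable_cong_sets[OF sets_unif_cube refl])

definition dat :: "nat \<Rightarrow> (real \<Rightarrow> real) \<Rightarrow> (nat \<Rightarrow> nat \<Rightarrow> real) \<Rightarrow> (nat \<Rightarrow> real) \<Rightarrow> nat \<Rightarrow> (nat \<Rightarrow> real) \<times> real" where
  "dat n t x z = (\<lambda>i\<in>{..<n}. (x i, t (z i)))"

lemma observed_dat: "observed n t g x e = dat n t x (shiftN n (\<lambda>i. g (x i)) e)"
  unfolding observed_def dat_def shiftN_def by (intro restrict_ext) simp

lemma obs_meas:
  assumes g: "g \<in> Gcls p q k" and t[measurable]: "t \<in> borel_measurable borel"
  shows "(\<lambda>(x, e). observed n t g x e) \<in> (PiM {..<n} (\<lambda>_. unif_cube p) \<Otimes>\<^sub>M gaussN n \<sigma>) \<rightarrow>\<^sub>M data_space p n"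
proof -
  note [measurable] = G_meas[OF g]
  show ?thesis
    unfolding observed_def data_space_def gaussN_def case_prod_beta
  proof (intro measurable_restrict)
    fix i assume i: "i \<in> {..<n}"
    show "(\<lambda>w. (fst w i, t (g (fst w i) + snd w i))) \<in> (PiM {..<n} (\<lambda>_. unif_cube p) \<Otimes>\<^sub>M PiM {..<n} (\<lambda>_. gauss \<sigma>)) \<rightarrow>\<^sub>M (PiM {1..p} (\<lambda>_. borel) \<Otimes>\<^sub>M borel)"
      using i by measurable
  qed
qed

lemma dat_meas:
  assumes x: "x \<in> space (PiM {..<n} (\<lambda>_. unif_cube p))" and t[measurable]: "t \<in> borel_measurable borel"
  shows "dat n t x \<in> gaussN n \<sigma> \<rightarrow>\<^sub>M data_space p n"
proof -
  have xi: "x i \<in> space (PiM {1..p} (\<lambda>_. borel :: real measure))" if "i < n" for i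
    using x that by (auto simp: space_PiM space_unif_cube)
  show ?thesis
    unfolding dat_def data_space_def gaussN_def
    by (intro measurable_restrict measurable_Pair measurable_const xi) measurable
qed


theorem theorem2:
  fixes p q k n :: nat and \<sigma> :: real and Y :: "real set" and t :: "real \<Rightarrow> real"
    and R :: "'r measure"
    and est :: "(nat \<Rightarrow> (nat \<Rightarrow> real) \<times> real) \<Rightarrow> 'r \<Rightarrow> ((nat \<Rightarrow> real) \<Rightarrow> real)"
  assumes "0 < p" "0 < q" "0 < k" "k + 1 \<le> p"
    and "0 < \<sigma>"
    and "t \<in> borel_measurable borel" "range t \<subseteq> Y"
    and "prob_space R"
    and "(\<lambda>(s, r). est s r) \<in> measurable (data_space p n \<Otimes>\<^sub>M R) (count_space (Gcls p q k))"
    and "real n \<le> (ln (real q ^ (k + 1) * real (p choose (k + 1))) - 2 * ln 2) * \<sigma>\<^sup>2 / 2"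
  shows "measure (sample_space p q k n \<sigma> R)
           {(g, xs, es, r) \<in> space (sample_space p q k n \<sigma> R). est (observed n t g xs es) r \<noteq> g}
         \<ge> 1 / 2"
proof -
  note s = assms(5)
  note tm[measurable] = assms(6)
  note estm = assms(9)
  note hyp = assms(10)
  interpret R: prob_space R by (rule assms(8))
  define G where "G = Gcls p q k"
  have finG: "finite G" unfolding G_def by (rule finite_G)
  have neG: "G \<noteq> {}" unfolding G_def by (rule G_nonempty)
  define Mr where "Mr = real (card G)"
  define X where "X = PiM {..<n} (\<lambda>_. unif_cube p)"
  define E where "E = gaussN n \<sigma>"
  define \<Omega> where "\<Omega> = X \<Otimes>\<^sub>M (E \<Otimes>\<^sub>M R)"
  define SS where "SS = sample_space p q k n \<sigma> R"
  have SS_def': "SS = uniform_count_measure G \<Otimes>\<^sub>M \<Omega>"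
    unfolding SS_def sample_space_def \<Omega>_def X_def E_def gaussN_def G_def ..
  interpret X: prob_space X unfolding X_def by (intro prob_space_PiM prob_unif_cube)
  interpret E: prob_space E unfolding E_def by (rule prob_space_gaussN[OF s])
  interpret ER: pair_prob_space E R ..
  interpret XER: pair_prob_space X "E \<Otimes>\<^sub>M R" ..
  interpret U: prob_space "uniform_count_measure G" by (rule prob_space_uniform_count_measure[OF finG neG])
  interpret UO: pair_prob_space "uniform_count_measure G" \<Omega> unfolding \<Omega>_def ..
  define \<delta> where "\<delta> x r z = est (dat n t x z) r" for x r z
  have \<delta>m: "\<delta> x r \<in> E \<rightarrow>\<^sub>M count_space G" if x: "x \<in> space X" and r: "r \<in> space R" for x r
  proof -
    have "(\<lambda>z. (dat n t x z, r)) \<in> E \<rightarrow>\<^sub>M (data_space p n \<Otimes>\<^sub>M R)"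
      unfolding E_def using dat_meas[OF x[unfolded X_def] tm] r by (intro measurable_Pair) auto
    from measurable_compose[OF this estm] show ?thesis unfolding \<delta>_def G_def by simp
  qed
  define F where "F g w = est (observed n t g (fst w) (fst (snd w))) (snd (snd w))" for g w
  have Fm: "F g \<in> \<Omega> \<rightarrow>\<^sub>M count_space G" if g: "g \<in> G" for g
  proof -
    have om: "(\<lambda>(x, e). observed n t g x e) \<in> (X \<Otimes>\<^sub>M E) \<rightarrow>\<^sub>M data_space p n"
      unfolding X_def E_def using obs_meas[OF g[unfolded G_def] tm] .
    have "(\<lambda>w. (observed n t g (fst w) (fst (snd w)), snd (snd w))) \<in> \<Omega> \<rightarrow>\<^sub>M (data_space p n \<Otimes>\<^sub>M R)"
      unfolding \<Omega>_def using om by measurable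
    from measurable_compose[OF this estm] show ?thesis unfolding F_def G_def by simp
  qed
  define Gg where "Gg g = {w \<in> space \<Omega>. F g w = g}" for g
  have Ggs: "Gg g \<in> sets \<Omega>" if "g \<in> G" for g
  proof -
    have "F g -` {g} \<inter> space \<Omega> \<in> sets \<Omega>" using that by (intro measurable_sets[OF Fm[OF that]]) auto
    moreover have "F g -` {g} \<inter> space \<Omega> = Gg g" unfolding Gg_def by auto
    ultimately show ?thesis by simp
  qed
  define GOOD where "GOOD = {\<omega> \<in> space SS. F (fst \<omega>) (snd \<omega>) = fst \<omega>}"
  have GOODs: "GOOD \<in> sets SS"
  proof -
    have pr: "(\<lambda>\<omega>. F (fst \<omega>) (snd \<omega>) = fst \<omega>) \<in> (count_space G \<Otimes>\<^sub>M \<Omega>) \<rightarrow>\<^sub>M count_space UNIV"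
    proof (rule measurable_pair_measure_countable1)
      show "countable G" using finG by (rule countable_finite)
      fix g assume g: "g \<in> G"
      have "(\<lambda>h. h = g) \<in> count_space G \<rightarrow>\<^sub>M count_space UNIV" by simp
      from measurable_compose[OF Fm[OF g] this]
      show "(\<lambda>w. F (fst (g, w)) (snd (g, w)) = fst (g, w)) \<in> \<Omega> \<rightarrow>\<^sub>M count_space UNIV" by simp
    qed
    have sc: "sets (uniform_count_measure G \<Otimes>\<^sub>M \<Omega>) = sets (count_space G \<Otimes>\<^sub>M \<Omega>)"
      by (intro sets_pair_measure_cong) (simp_all add: sets_uniform_count_measure)
    have "Measurable.pred SS (\<lambda>\<omega>. F (fst \<omega>) (snd \<omega>) = fst \<omega>)"
      unfolding SS_def' pred_def using pr by (simp add: measurable_cong_sets[OF sc refl])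
    then show ?thesis unfolding GOOD_def by measurable
  qed
  have BAD: "{(g, xs, es, r) \<in> space (sample_space p q k n \<sigma> R). est (observed n t g xs es) r \<noteq> g} = space SS - GOOD"
    unfolding GOOD_def SS_def F_def by auto
  define M0 where "M0 = real q ^ (k + 1) * real (p choose (k + 1))"
  have M0Mr: "M0 \<le> Mr"
  proof -
    have "q ^ (k + 1) * (p choose (k + 1)) \<le> card G" unfolding G_def by (rule card_G_ge)
    then have "real (q ^ (k + 1) * (p choose (k + 1))) \<le> real (card G)" by (rule of_nat_mono)
    then show ?thesis unfolding M0_def Mr_def by simp
  qed
  have s2: "0 < \<sigma>\<^sup>2" using s by simp
  have lnM0: "2 * ln 2 \<le> ln M0"
  proof -
    have "0 \<le> (ln M0 - 2 * ln 2) * \<sigma>\<^sup>2 / 2" using hyp unfolding M0_def by (smt (verit) of_nat_0_le_iff)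
    then have "0 \<le> (ln M0 - 2 * ln 2) * \<sigma>\<^sup>2" by simp
    then show ?thesis using s2 by (simp add: zero_le_mult_iff)
  qed
  have M0pos: "0 < M0"
  proof (rule ccontr)
    assume "\<not> 0 < M0"
    moreover have "0 \<le> M0" unfolding M0_def by simp
    ultimately have "M0 = 0" by simp
    then have "ln M0 = 0" by simp
    moreover have "0 < ln (2::real)" by simp
    ultimately show False using lnM0 by simp
  qed
  have lnMr: "2 * ln 2 \<le> ln Mr" using lnM0 M0Mr M0pos by (smt (verit) ln_le_cancel_iff)
  have Lpos: "0 < ln Mr" using lnMr by (smt (verit) ln_gt_zero_iff one_less_numeral_iff semiring_norm(76))
  have Mrpos: "0 < Mr" using M0Mr M0pos by simp
  have nbound: "real n / (2 * \<sigma>\<^sup>2) \<le> (ln Mr - 2 * ln 2) / 4"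
  proof -
    have "real n \<le> (ln Mr - 2 * ln 2) * \<sigma>\<^sup>2 / 2"
      using hyp ln_le_cancel_iff[OF M0pos Mrpos] M0Mr s2 unfolding M0_def[symmetric]
      by (smt (verit) mult_right_mono divide_right_mono)
    then show ?thesis using s2 by (simp add: field_simps)
  qed
  define c0 where "c0 = Mr * ln 2 / ln Mr"
  define c1 where "c1 = 1 / (2 * \<sigma>\<^sup>2 * ln Mr)"
  have c0pos: "0 \<le> c0" unfolding c0_def using Lpos Mrpos by simp
  have c1pos: "0 \<le> c1" unfolding c1_def using Lpos s2 by simp
  define \<Psi> where "\<Psi> x = c0 + (\<Sum>g\<in>G. \<Sum>i<n. c1 * (g (x i))\<^sup>2)" for x :: "nat \<Rightarrow> nat \<Rightarrow> real"
  define H where "H w = (\<Sum>g\<in>G. indicator (Gg g) w :: ennreal)" for w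
  have Hm[measurable]: "H \<in> borel_measurable \<Omega>"
    unfolding H_def using Ggs by (intro borel_measurable_sum) auto
  have sp\<Omega>: "space \<Omega> = space X \<times> (space E \<times> space R)"
    unfolding \<Omega>_def by (simp add: space_pair_measure)
  have stepB: "emeasure SS GOOD = (\<Sum>g\<in>G. ennreal (1 / real (card G)) * emeasure \<Omega> (Gg g))"
  proof -
    have "emeasure SS GOOD = (\<integral>\<^sup>+ g. emeasure \<Omega> (Pair g -` GOOD) \<partial>uniform_count_measure G)"
      unfolding SS_def' using GOODs[unfolded SS_def'] by (rule UO.M2.emeasure_pair_measure_alt)
    also have "\<dots> = (\<Sum>g\<in>G. ennreal (1 / real (card G)) * emeasure \<Omega> (Pair g -` GOOD))"
      unfolding uniform_count_measure_def using finG by (rule nn_integral_point_measure_finite)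
    also have "\<dots> = (\<Sum>g\<in>G. ennreal (1 / real (card G)) * emeasure \<Omega> (Gg g))"
    proof (intro sum.cong refl)
      fix g assume g: "g \<in> G"
      have "Pair g -` GOOD = Gg g"
        using g unfolding GOOD_def Gg_def SS_def' by (auto simp: space_pair_measure space_uniform_count_measure)
      then show "ennreal (1 / real (card G)) * emeasure \<Omega> (Pair g -` GOOD) = ennreal (1 / real (card G)) * emeasure \<Omega> (Gg g)"
        by simp
    qed
    finally show ?thesis .
  qed
  have stepC: "(\<Sum>g\<in>G. emeasure \<Omega> (Gg g)) = (\<integral>\<^sup>+ w. H w \<partial>\<Omega>)"
  proof -
    have "(\<Sum>g\<in>G. emeasure \<Omega> (Gg g)) = (\<Sum>g\<in>G. \<integral>\<^sup>+ w. indicator (Gg g) w \<partial>\<Omega>)"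
      using Ggs by (intro sum.cong refl) simp
    also have "\<dots> = (\<integral>\<^sup>+ w. H w \<partial>\<Omega>)"
      unfolding H_def using Ggs by (intro nn_integral_sum[symmetric]) auto
    finally show ?thesis .
  qed
  have inner: "(\<integral>\<^sup>+ e. H (x, (e, r)) \<partial>E) \<le> ennreal (\<Psi> x)" if x: "x \<in> space X" and r: "r \<in> space R" for x r
  proof -
    define S where "S g = shiftN n (\<lambda>i. g (x i)) -` {z \<in> space E. \<delta> x r z = g} \<inter> space E" for g
    have secm: "(\<lambda>e. (x, (e, r))) \<in> E \<rightarrow>\<^sub>M \<Omega>"
      unfolding \<Omega>_def using x r by (intro measurable_Pair measurable_const measurable_Pair2') auto
    have Bs: "{z \<in> space E. \<delta> x r z = g} \<in> sets E" if g: "g \<in> G" for g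
    proof -
      have "\<delta> x r -` {g} \<inter> space E \<in> sets E" using g by (intro measurable_sets[OF \<delta>m[OF x r]]) auto
      moreover have "\<delta> x r -` {g} \<inter> space E = {z \<in> space E. \<delta> x r z = g}" by auto
      ultimately show ?thesis by simp
    qed
    have Ss: "S g \<in> sets E" if g: "g \<in> G" for g
      unfolding S_def E_def using Bs[OF g, unfolded E_def] by (rule measurable_sets[OF shiftN_meas])
    have each: "(\<integral>\<^sup>+ e. indicator (Gg g) (x, (e, r)) \<partial>E) = ennreal (measure E (S g))" if g: "g \<in> G" for g
    proof -
      have "(\<integral>\<^sup>+ e. indicator (Gg g) (x, (e, r)) \<partial>E) = (\<integral>\<^sup>+ e. indicator (S g) e \<partial>E)"
      proof (intro nn_integral_cong)
        fix e assume e: "e \<in> space E"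
        have sh: "shiftN n (\<lambda>i. g (x i)) e \<in> space E"
          using measurable_space[OF shiftN_meas e[unfolded E_def]] unfolding E_def .
        have "(x, (e, r)) \<in> space \<Omega>" using x e r by (simp add: sp\<Omega>)
        moreover have "F g (x, (e, r)) = \<delta> x r (shiftN n (\<lambda>i. g (x i)) e)"
          unfolding F_def \<delta>_def by (simp add: observed_dat)
        ultimately have "(x, (e, r)) \<in> Gg g \<longleftrightarrow> e \<in> S g"
          using e sh unfolding Gg_def S_def by auto
        then show "indicator (Gg g) (x, (e, r)) = (indicator (S g) e :: ennreal)"
          by (simp add: indicator_def)
      qed
      also have "\<dots> = emeasure E (S g)" using Ss[OF g] by simp
      also have "\<dots> = ennreal (measure E (S g))" by (simp add: E.emeasure_eq_measure)
      finally show ?thesis .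
    qed
    have "(\<integral>\<^sup>+ e. H (x, (e, r)) \<partial>E) = (\<Sum>g\<in>G. \<integral>\<^sup>+ e. indicator (Gg g) (x, (e, r)) \<partial>E)"
      unfolding H_def using Ggs
      by (intro nn_integral_sum) (auto intro!: measurable_compose[OF secm] borel_measurable_indicator)
    also have "\<dots> = (\<Sum>g\<in>G. ennreal (measure E (S g)))"
      using each by (intro sum.cong refl) auto
    also have "\<dots> = ennreal (\<Sum>g\<in>G. measure E (S g))" by simp
    also have "\<dots> \<le> ennreal (\<Psi> x)"
    proof (intro ennreal_leI)
      have sb: "ln Mr * (\<Sum>g\<in>G. measure E (S g)) \<le> Mr * ln 2 + (\<Sum>g\<in>G. (\<Sum>i<n. (g (x i))\<^sup>2) / (2 * \<sigma>\<^sup>2))"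
        using sum_bound[OF s finG neG \<delta>m[OF x r, unfolded E_def], of "\<lambda>g i. g (x i)"]
        unfolding S_def E_def Mr_def by simp
      have "(\<Sum>g\<in>G. measure E (S g)) \<le> (Mr * ln 2 + (\<Sum>g\<in>G. (\<Sum>i<n. (g (x i))\<^sup>2) / (2 * \<sigma>\<^sup>2))) / ln Mr"
        using sb Lpos by (simp add: pos_le_divide_eq mult.commute)
      also have "\<dots> = \<Psi> x"
        unfolding \<Psi>_def c0_def c1_def using Lpos s2
        by (simp add: add_divide_distrib sum_divide_distrib sum_distrib_left)
      finally show "(\<Sum>g\<in>G. measure E (S g)) \<le> \<Psi> x" .
    qed
    finally show ?thesis .
  qed
  have mid: "(\<integral>\<^sup>+ y. H (x, y) \<partial>(E \<Otimes>\<^sub>M R)) \<le> ennreal (\<Psi> x)" if x: "x \<in> space X" for x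
  proof -
    have Hx: "(\<lambda>y. H (x, y)) \<in> borel_measurable (E \<Otimes>\<^sub>M R)"
      using measurable_compose[OF measurable_Pair1'[OF x] Hm[unfolded \<Omega>_def]] by simp
    have "(\<integral>\<^sup>+ y. H (x, y) \<partial>(E \<Otimes>\<^sub>M R)) = (\<integral>\<^sup>+ r. \<integral>\<^sup>+ e. H (x, (e, r)) \<partial>E \<partial>R)"
      using ER.nn_integral_snd[OF Hx] by simp
    also have "\<dots> \<le> (\<integral>\<^sup>+ r. ennreal (\<Psi> x) \<partial>R)"
      using inner[OF x] by (intro nn_integral_mono) auto
    also have "\<dots> = ennreal (\<Psi> x)" by (simp add: R.emeasure_space_1)
    finally show ?thesis .
  qed
  have outer: "(\<integral>\<^sup>+ x. ennreal (\<Psi> x) \<partial>X) = ennreal (c0 + Mr * real n * c1)"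
  proof -
    have compm: "(\<lambda>x. x i) \<in> X \<rightarrow>\<^sub>M unif_cube p" if "i < n" for i
      unfolding X_def using that by (intro measurable_PiM_component_rev) auto
    have marg: "(\<integral>\<^sup>+ x. f (x i) \<partial>X) = (\<integral>\<^sup>+ y. f y \<partial>unif_cube p)"
      if i: "i < n" and f: "f \<in> borel_measurable (unif_cube p)" for i f
    proof -
      have "distr X (unif_cube p) (\<lambda>x. x i) = unif_cube p"
        unfolding X_def using i by (intro distr_PiM_component prob_unif_cube) auto
      then have "(\<integral>\<^sup>+ y. f y \<partial>unif_cube p) = (\<integral>\<^sup>+ y. f y \<partial>distr X (unif_cube p) (\<lambda>x. x i))" by simp
      also have "\<dots> = (\<integral>\<^sup>+ x. f (x i) \<partial>X)" using compm[OF i] f by (intro nn_integral_distr) (simp_all add: measurable_cong_sets[OF sets_distr refl])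
      finally show ?thesis by simp
    qed
    have gm: "g \<in> borel_measurable (unif_cube p)" if "g \<in> G" for g
      using that unfolding G_def by (rule G_meas')
    have trm: "(\<integral>\<^sup>+ x. ennreal (c1 * (g (x i))\<^sup>2) \<partial>X) = ennreal c1" if g: "g \<in> G" and i: "i < n" for g i
    proof -
      obtain A where A: "admissible p q k A" "g = gA A" using g unfolding G_def Gcls_def by auto
      have m2: "(\<lambda>y. ennreal ((g y)\<^sup>2)) \<in> borel_measurable (unif_cube p)" using gm[OF g] by measurable
      have "(\<integral>\<^sup>+ x. ennreal (c1 * (g (x i))\<^sup>2) \<partial>X) = (\<integral>\<^sup>+ x. ennreal c1 * ennreal ((g (x i))\<^sup>2) \<partial>X)"
        using c1pos by (intro nn_integral_cong) (simp add: ennreal_mult)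
      also have "\<dots> = ennreal c1 * (\<integral>\<^sup>+ x. ennreal ((g (x i))\<^sup>2) \<partial>X)"
        using measurable_compose[OF compm[OF i] m2] by (intro nn_integral_cmult) auto
      also have "(\<integral>\<^sup>+ x. ennreal ((g (x i))\<^sup>2) \<partial>X) = (\<integral>\<^sup>+ y. ennreal ((g y)\<^sup>2) \<partial>unif_cube p)"
        using marg[OF i m2] by simp
      also have "\<dots> = 1" unfolding A(2) by (rule gA_sq_int[OF A(1)])
      finally show ?thesis by simp
    qed
    have tm2: "(\<lambda>x. ennreal (c1 * (g (x i))\<^sup>2)) \<in> borel_measurable X" if g: "g \<in> G" and i: "i < n" for g i
    proof -
      have "(\<lambda>y. ennreal (c1 * (g y)\<^sup>2)) \<in> borel_measurable (unif_cube p)" using gm[OF g] by measurable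
      from measurable_compose[OF compm[OF i] this] show ?thesis .
    qed
    have "(\<integral>\<^sup>+ x. ennreal (\<Psi> x) \<partial>X) = (\<integral>\<^sup>+ x. ennreal c0 + (\<Sum>g\<in>G. \<Sum>i<n. ennreal (c1 * (g (x i))\<^sup>2)) \<partial>X)"
      unfolding \<Psi>_def using c0pos c1pos
      by (intro nn_integral_cong) (simp add: ennreal_plus sum_nonneg)
    also have "\<dots> = (\<integral>\<^sup>+ x. ennreal c0 \<partial>X) + (\<integral>\<^sup>+ x. (\<Sum>g\<in>G. \<Sum>i<n. ennreal (c1 * (g (x i))\<^sup>2)) \<partial>X)"
      using tm2 by (intro nn_integral_add) (auto intro!: borel_measurable_sum)
    also have "(\<integral>\<^sup>+ x. (\<Sum>g\<in>G. \<Sum>i<n. ennreal (c1 * (g (x i))\<^sup>2)) \<partial>X)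
        = (\<Sum>g\<in>G. \<Sum>i<n. \<integral>\<^sup>+ x. ennreal (c1 * (g (x i))\<^sup>2) \<partial>X)"
      using tm2 by (subst nn_integral_sum) (auto intro!: sum.cong nn_integral_sum borel_measurable_sum)
    also have "\<dots> = (\<Sum>g\<in>G. \<Sum>i<n. ennreal c1)"
      using trm by (intro sum.cong refl) auto
    also have "\<dots> = ennreal (Mr * real n * c1)"
      using c1pos by (simp add: Mr_def ennreal_mult' ennreal_of_nat_eq_real_of_nat mult.assoc)
    also have "(\<integral>\<^sup>+ x. ennreal c0 \<partial>X) = ennreal c0" by (simp add: X.emeasure_space_1)
    finally show ?thesis using c0pos c1pos Mrpos by (simp add: ennreal_plus)
  qed
  have total: "(\<integral>\<^sup>+ w. H w \<partial>\<Omega>) \<le> ennreal (c0 + Mr * real n * c1)"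
  proof -
    have "(\<integral>\<^sup>+ w. H w \<partial>\<Omega>) = (\<integral>\<^sup>+ x. \<integral>\<^sup>+ y. H (x, y) \<partial>(E \<Otimes>\<^sub>M R) \<partial>X)"
      unfolding \<Omega>_def using Hm[unfolded \<Omega>_def] by (rule ER.P.nn_integral_fst[symmetric])
    also have "\<dots> \<le> (\<integral>\<^sup>+ x. ennreal (\<Psi> x) \<partial>X)"
      using mid by (intro nn_integral_mono) auto
    finally show ?thesis using outer by simp
  qed
  have eGOOD: "emeasure SS GOOD \<le> ennreal ((c0 + Mr * real n * c1) / Mr)"
  proof -
    have "emeasure SS GOOD = ennreal (1 / Mr) * (\<Sum>g\<in>G. emeasure \<Omega> (Gg g))"
      unfolding stepB Mr_def by (simp add: sum_distrib_left)
    also have "\<dots> \<le> ennreal (1 / Mr) * ennreal (c0 + Mr * real n * c1)"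
      unfolding stepC by (intro mult_left_mono total) simp
    also have "\<dots> = ennreal ((c0 + Mr * real n * c1) / Mr)"
      using Mrpos by (simp add: ennreal_mult'[symmetric])
    finally show ?thesis .
  qed
  have arith: "(c0 + Mr * real n * c1) / Mr \<le> 1/2"
  proof -
    have "(c0 + Mr * real n * c1) / Mr = (ln 2 + real n / (2 * \<sigma>\<^sup>2)) / ln Mr"
      unfolding c0_def c1_def using Mrpos Lpos s2 by (simp add: field_simps)
    also have "\<dots> \<le> (ln 2 + (ln Mr - 2 * ln 2) / 4) / ln Mr"
      using nbound Lpos by (intro divide_right_mono) auto
    also have "\<dots> \<le> 1/2"
      using lnMr Lpos by (simp add: field_simps)
    finally show ?thesis .
  qed
  have main: "measure SS GOOD \<le> 1/2"
  proof -
    have "ennreal (measure SS GOOD) \<le> ennreal (1/2)"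
      using eGOOD arith unfolding SS_def' UO.P.emeasure_eq_measure[symmetric]
      by (meson ennreal_leI order_trans)
    then show ?thesis by (subst (asm) ennreal_le_iff) auto
  qed
  have "measure SS (space SS - GOOD) = 1 - measure SS GOOD"
    unfolding SS_def' using GOODs[unfolded SS_def'] by (intro UO.P.prob_compl)
  then show ?thesis using main BAD unfolding SS_def by simp
qed


end
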